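(* Let $m\ge 2$ be a prime and $n\ge 1$ an integer. If $p(m,n)\neq 0$, then $n \equiv r \pmod{m^2}$ for some $r\in\{-1,0,1,\dots,m-2\}$.
   Context: For integers $m\ge 2$, $n\ge 1$, a valid $(m,n)$-sequence is a sequence $(a_1,\dots,a_{mn})$ with entries in $\{1,\dots,n\}$ in which each $k\in\{1,\dots,n\}$ occurs exactly $m$ times, and such that any two consecutive occurrences of $k$ are separated by exactly $k$ other terms; equivalently, there is an index $\theta_k$ such that $k$ occurs exactly at the positions $\theta_k,\ \theta_k+(k+1),\ \theta_k+2(k+1),\dots,\theta_k+(m-1)(k+1)$ (all in $\{1,\dots,mn\}$). Example: $3\,1\,2\,1\,3\,2$ is a valid $(2,3)$-sequence. The reversal $(a_{mn},\dots,a_1)$ of a valid sequence is again valid; $p(m,n)$ denotes the number of valid $(m,n)$-sequences counted up to reversal (i.e. the number of equivalence classes of valid $(m,n)$-sequences under identifying a sequence with its reversal). *)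

theory Defs
  imports "HOL-Computational_Algebra.Primes" "HOL-Number_Theory.Cong"
begin

text \<open>A list xs represents the sequence (a_1,...,a_{mn}) with a_i = xs ! (i - 1).\<close>
definition valid_seq :: "nat \<Rightarrow> nat \<Rightarrow> nat list \<Rightarrow> bool" where
  "valid_seq m n xs \<longleftrightarrow>
     length xs = m * n \<and> set xs \<subseteq> {1..n} \<and>
     (\<forall>k\<in>{1..n}. \<exists>\<theta>. 1 \<le> \<theta> \<and> \<theta> + (m - 1) * (k + 1) \<le> m * n \<and>
        {i \<in> {1..m * n}. xs ! (i - 1) = k} = {\<theta> + j * (k + 1) | j. j < m})"

definition p :: "nat \<Rightarrow> nat \<Rightarrow> nat" where
  "p m n = card ((\<lambda>xs. {xs, rev xs}) ` {xs. valid_seq m n xs})"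

end

theory Submission
  imports Defs
begin

lemma card_mult_le: "card {x\<in>{1..N::nat}. m dvd x} = N div m" if "m \<ge> 1" for m
proof (induction N)
  case 0 then show ?case by simp
next
  case (Suc N)
  show ?case
  proof (cases "m dvd Suc N")
    case True
    have "{x\<in>{1..Suc N}. m dvd x} = insert (Suc N) {x\<in>{1..N}. m dvd x}"
      using True by auto
    then have "card {x\<in>{1..Suc N}. m dvd x} = Suc (N div m)" using Suc by simp
    moreover have "Suc N div m = Suc (N div m)"
      using True by (simp add: div_Suc dvd_eq_mod_eq_0)
    ultimately show ?thesis by simp
  next
    case False
    have "{x\<in>{1..Suc N}. m dvd x} = {x\<in>{1..N}. m dvd x}"
      using False by (auto simp: le_Suc_eq)
    moreover have "Suc N div m = N div m"
      using False by (simp add: div_Suc dvd_eq_mod_eq_0)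
    ultimately show ?thesis using Suc by simp
  qed
qed

lemma card_prime_one:
  assumes "prime (m::nat)" "\<not> m dvd d"
  shows "card {j\<in>{..<m}. m dvd a + j*d} = 1"
proof -
  have m0: "m > 0" using assms prime_gt_0_nat by blast
  define g where "g j = (a + j*d) mod m" for j
  have inj: "inj_on g {..<m}"
  proof (rule inj_onI)
    fix x y assume x: "x \<in> {..<m}" and y: "y \<in> {..<m}" and e: "g x = g y"
    have "[a + x*d = a + y*d] (mod m)" using e by (simp add: g_def cong_def)
    then have "[x*d = y*d] (mod m)" by (simp add: cong_add_lcancel_nat)
    moreover have "coprime m d" using assms by (simp add: prime_imp_coprime)
    ultimately have "[x = y] (mod m)"
      by (metis cong_mult_rcancel_nat coprime_commute)
    then show "x = y" using x y by (simp add: cong_def)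
  qed
  have "g ` {..<m} \<subseteq> {..<m}" using m0 by (auto simp: g_def)
  then have im: "g ` {..<m} = {..<m}"
    using inj by (simp add: endo_inj_surj)
  then obtain j0 where j0: "j0 < m" "g j0 = 0" using m0 by (metis imageE lessThan_iff)
  have u: "j = j0" if "j<m" "m dvd a+j*d" for j
  proof -
    have "g j = g j0" using j0 that by (simp add: g_def dvd_eq_mod_eq_0)
    then show "j = j0" using inj j0 that by (metis inj_onD lessThan_iff)
  qed
  have "m dvd a + j0 * d" using j0 by (simp add: g_def dvd_eq_mod_eq_0)
  then have "{j\<in>{..<m}. m dvd a + j*d} = {j0}"
    using u j0 by blast
  then show ?thesis by simp
qed

lemma set_dvd_d:
  assumes "(m::nat) dvd d"
  shows "{j\<in>{..<m}. m dvd a + j*d} = (if m dvd a then {..<m} else {})"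
  using assms by (auto simp: dvd_add_left_iff)

theorem theorem1:
  fixes m n :: nat
  assumes "prime m" and "m \<ge> 2" and "n \<ge> 1" and "p m n \<noteq> 0"
  shows "\<exists>r::int. -1 \<le> r \<and> r \<le> int m - 2 \<and> [int n = r] (mod (int m ^ 2))"
proof -
  have "{xs. valid_seq m n xs} \<noteq> {}"
    using assms(4) unfolding p_def by (metis card.empty image_empty)
  then obtain xs where v: "valid_seq m n xs" by auto
  have len: "length xs = m*n" and sub: "set xs \<subseteq> {1..n}"
    and ex: "\<forall>k\<in>{1..n}. \<exists>\<theta>. 1 \<le> \<theta> \<and> \<theta> + (m - 1) * (k + 1) \<le> m * n \<and>
        {i \<in> {1..m * n}. xs ! (i - 1) = k} = {\<theta> + j * (k + 1) | j. j < m}"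
    using v unfolding valid_seq_def by auto
  define P where "P k = {i \<in> {1..m * n}. xs ! (i - 1) = k}" for k
  from bchoice[OF ex] obtain th where th0: "\<forall>k\<in>{1..n}. 1 \<le> th k \<and> th k + (m - 1) * (k + 1) \<le> m * n \<and>
        {i \<in> {1..m * n}. xs ! (i - 1) = k} = {th k + j * (k + 1) | j. j < m}" by blast
  have th: "\<And>k. k\<in>{1..n} \<Longrightarrow> P k = {th k + j * (k + 1) | j. j < m}"
    using th0 unfolding P_def by blast
  define Z where "Z = {i\<in>{1..m*n}. m dvd i}"
  have m1: "m \<ge> 1" using assms(2) by simp
  have cZ: "card Z = n" unfolding Z_def using card_mult_le[OF m1, of "m*n"] m1 by simp
  have Zu: "Z = (\<Union>k\<in>{1..n}. Z \<inter> P k)"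
  proof safe
    fix i assume i: "i \<in> Z"
    then have "i - 1 < length xs" using len by (auto simp: Z_def)
    then have "xs ! (i-1) \<in> {1..n}" using sub nth_mem by blast
    then show "i \<in> (\<Union>k\<in>{1..n}. Z \<inter> P k)" using i by (auto simp: P_def Z_def)
  qed
  define f where "f k = card {j\<in>{..<m}. m dvd th k + j*(k+1)}" for k
  have cZP: "card (Z \<inter> P k) = f k" if k: "k \<in> {1..n}" for k
  proof -
    have "P k \<subseteq> {1..m*n}" by (auto simp: P_def)
    then have "Z \<inter> P k = {i \<in> P k. m dvd i}" by (auto simp: Z_def)
    also have "\<dots> = (\<lambda>j. th k + j*(k+1)) ` {j\<in>{..<m}. m dvd th k + j*(k+1)}"
      using th[OF k] by auto
    finally have e: "Z \<inter> P k = (\<lambda>j. th k + j*(k+1)) ` {j\<in>{..<m}. m dvd th k + j*(k+1)}" .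
    have "inj_on (\<lambda>j. th k + j*(k+1)) {j\<in>{..<m}. m dvd th k + j*(k+1)}"
      by (rule inj_onI) (metis add_left_cancel add_is_0 mult_right_cancel one_neq_zero)
    then show ?thesis unfolding e f_def by (rule card_image)
  qed
  have "card Z = (\<Sum>k\<in>{1..n}. card (Z \<inter> P k))"
    apply (subst Zu)
    apply (rule card_UN_disjoint)
    by (auto simp: Z_def P_def)
  also have "\<dots> = (\<Sum>k\<in>{1..n}. f k)" using cZP by simp
  finally have s1: "n = (\<Sum>k\<in>{1..n}. f k)" using cZ by simp
  define A where "A = {k\<in>{1..n}. \<not> m dvd k+1}"
  define K where "K = {k\<in>{1..n}. m dvd k+1}"
  have AK: "{1..n} = A \<union> K" "A \<inter> K = {}" by (auto simp: A_def K_def)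
  have "(\<Sum>k\<in>A. f k) = (\<Sum>k\<in>A. 1)"
    apply (rule sum.cong, simp)
    unfolding f_def A_def by (rule card_prime_one[OF assms(1)]) auto
  then have sA: "(\<Sum>k\<in>A. f k) = card A" by simp
  have "(\<Sum>k\<in>K. f k) = (\<Sum>k\<in>K. if m dvd th k then m else 0)"
  proof (rule sum.cong)
    fix k assume "k \<in> K"
    then have "m dvd k+1" by (simp add: K_def)
    then show "f k = (if m dvd th k then m else 0)"
      unfolding f_def set_dvd_d[OF \<open>m dvd k+1\<close>] by simp
  qed simp
  also have "\<dots> = (\<Sum>k\<in>{k\<in>K. m dvd th k}. m)"
    by (rule sum.inter_filter[symmetric]) (simp add: K_def)
  finally have sK: "(\<Sum>k\<in>K. f k) = m * card {k\<in>K. m dvd th k}" by simp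
  have "n = card A + m * card {k\<in>K. m dvd th k}"
  proof -
    have fA: "finite A" "finite K" by (auto simp: A_def K_def)
    have "n = sum f (A \<union> K)" using s1 AK(1) by simp
    also have "\<dots> = sum f A + sum f K" using sum.union_disjoint[OF fA AK(2)] .
    finally show ?thesis using sA sK by simp
  qed
  moreover have "n = card A + card K"
  proof -
    have fA: "finite A" "finite K" by (auto simp: A_def K_def)
    have "n = card (A \<union> K)" using AK(1) by (metis card_atLeastAtMost diff_Suc_1)
    then show ?thesis using card_Un_disjoint[OF fA AK(2)] by simp
  qed
  ultimately have cK: "card K = m * card {k\<in>K. m dvd th k}" by simp
  have "{x\<in>{1..n+1}. m dvd x} = Suc ` K"
  proof safe
    fix x assume x: "x \<in> {1..n+1}" "m dvd x"
    have "x \<noteq> 1" using x assms(2) by auto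
    then have "x = Suc (x-1)" "x - 1 \<in> K" using x by (auto simp: K_def)
    then show "x \<in> Suc ` K" by blast
  qed (auto simp: K_def)
  then have "card K = (n+1) div m"
    using card_mult_le[OF m1, of "n+1"] card_image[of Suc K] by simp
  then have "(n+1) div m = m * card {k\<in>K. m dvd th k}" using cK by simp
  then obtain c where c: "(n+1) div m = m * c" by blast
  define s where "s = (n+1) mod m"
  have sm: "s < m" using m1 by (simp add: s_def)
  have "n + 1 = m * (m * c) + s" using c unfolding s_def by (metis div_mult_mod_eq mult.commute)
  then have "int (n + 1) = int (m * (m * c) + s)" by (rule arg_cong)
  then have h: "int n + 1 = int m * (int m * int c) + int s" by simp
  then have e: "int n = int m ^ 2 * int c + (int s - 1)"
    by (simp add: power2_eq_square algebra_simps)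
  show ?thesis
  proof (intro exI conjI)
    show "-1 \<le> int s - 1" by simp
    show "int s - 1 \<le> int m - 2" using sm by simp
    show "[int n = int s - 1] (mod int m ^ 2)"
      unfolding cong_iff_dvd_diff using e by simp
  qed
qed

end
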